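(* Let $d\geq 3$ be an integer and let $N_d = 3^d\cdot \mathrm{lcm}\{3^1-2^1,3^2-2^2,\ldots,3^d-2^d\}$. Let $\mathcal{H}$ be a complex Hilbert space with $\dim(\mathcal{H})\leq d$, and let $U,V$ be unitary operators on $\mathcal{H}$ such that $$\|V^{-1}U^2V-U^3\|<\varepsilon$$ for some $\varepsilon$ with $0<\varepsilon<\frac{1}{6\cdot 3^d\, d\, N_d}$. Then $$\|UV^{-1}UV-V^{-1}UVU\|<4d^3N_d\,\varepsilon .$$
   Context: $\|\cdot\|$ denotes the operator norm. *)

theory Defs
  imports "HOL-Analysis.Analysis"
begin

text \<open>A complex Hilbert space of finite dimension n is modelled as complex^'n
(the norm on complex^'n is the standard Hermitian l2-norm); operators are
matrices complex^'n^'n acting by *v.\<close>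

definition conj_transpose :: "complex^'n^'m \<Rightarrow> complex^'m^'n" where
  "conj_transpose A = (\<chi> i j. cnj (A $ j $ i))"

definition unitary_op :: "complex^'n^'n \<Rightarrow> bool" where
  "unitary_op U \<longleftrightarrow> U ** conj_transpose U = mat 1 \<and> conj_transpose U ** U = mat 1"

definition op_norm :: "complex^'n^'m \<Rightarrow> real" where
  "op_norm A = onorm (\<lambda>x. A *v x)"

definition N_const :: "nat \<Rightarrow> nat" where
  "N_const d = 3 ^ d * Lcm ((\<lambda>k. 3 ^ k - 2 ^ k) ` {1..d})"

end

theory Submission
  imports Defs "HOL-Computational_Algebra.Fundamental_Theorem_Algebra"
begin

definition hip :: "complex^'n \<Rightarrow> complex^'n \<Rightarrow> complex" where
  "hip x y = (\<Sum>i\<in>UNIV. x$i * cnj (y$i))"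

lemma hip_add_left: "hip (x + y) z = hip x z + hip y z"
  by (simp add: hip_def sum.distrib algebra_simps)
lemma hip_diff_left: "hip (x - y) z = hip x z - hip y z"
  by (simp add: hip_def sum_subtractf algebra_simps)
lemma hip_smult_left: "hip (c *s x) y = c * hip x y"
  by (simp add: hip_def sum_distrib_left algebra_simps)
lemma hip_smult_right: "hip x (c *s y) = cnj c * hip x y"
  by (simp add: hip_def sum_distrib_left algebra_simps)
lemma hip_zero_left[simp]: "hip 0 y = 0"
  by (simp add: hip_def)
lemma hip_sum_left: "hip (\<Sum>b\<in>B. f b) y = (\<Sum>b\<in>B. hip (f b) y)"
  by (simp add: hip_def sum_component sum_distrib_right) (rule sum.swap)
lemma hip_cnj: "hip y x = cnj (hip x y)"
  by (simp add: hip_def mult.commute)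
lemma hip_self: "hip x x = complex_of_real ((norm x)^2)"
proof -
  have "(norm x)^2 = (\<Sum>i\<in>UNIV. (cmod (x$i))^2)"
    by (simp add: norm_vec_def L2_set_def sum_nonneg)
  have "hip x x = (\<Sum>i\<in>UNIV. complex_of_real ((cmod (x$i))^2))"
    unfolding hip_def complex_norm_square ..
  also have "\<dots> = complex_of_real ((norm x)^2)"
    unfolding of_real_sum[symmetric] \<open>(norm x)^2 = _\<close> ..
  finally show ?thesis .
qed

lemma norm_eq_hip: "norm x = norm y \<longleftrightarrow> hip x x = hip y y"
  by (simp only: hip_self of_real_eq_iff) (metis norm_ge_zero power2_eq_iff_nonneg)

lemma ct_apply: "conj_transpose A $ i $ j = cnj (A $ j $ i)"
  by (simp add: conj_transpose_def)

lemma hip_adj: "hip (A *v x) y = hip x (conj_transpose A *v y)"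
  unfolding hip_def matrix_vector_mult_def
  by (simp add: ct_apply sum_distrib_left sum_distrib_right algebra_simps) (rule sum.swap)

lemma ct_ct[simp]: "conj_transpose (conj_transpose A) = A"
  by (simp add: conj_transpose_def vec_eq_iff)

lemma ct_mult: "conj_transpose (A ** B) = conj_transpose B ** conj_transpose A"
  by (simp add: conj_transpose_def vec_eq_iff matrix_matrix_mult_def mult.commute)

lemma unitary_norm:
  assumes "conj_transpose U ** U = mat 1"
  shows "norm (U *v x) = norm x"
  unfolding norm_eq_hip hip_adj matrix_vector_mul_assoc assms by simp

lemma unitary_ct: "unitary_op U \<Longrightarrow> unitary_op (conj_transpose U)"
  by (simp add: unitary_op_def)

lemma unitary_mult:
  assumes "unitary_op A" "unitary_op B" shows "unitary_op (A ** B)"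
proof -
  have 1: "A ** conj_transpose A = mat 1" "conj_transpose A ** A = mat 1"
    "B ** conj_transpose B = mat 1" "conj_transpose B ** B = mat 1"
    using assms by (auto simp: unitary_op_def)
  have "A ** B ** (conj_transpose B ** conj_transpose A) = A ** (B ** conj_transpose B) ** conj_transpose A"
    by (simp add: matrix_mul_assoc)
  moreover have "conj_transpose B ** conj_transpose A ** (A ** B) = conj_transpose B ** (conj_transpose A ** A) ** B"
    by (simp add: matrix_mul_assoc)
  ultimately show ?thesis using 1 by (simp add: unitary_op_def ct_mult)
qed

lemma unitary_inv:
  assumes "unitary_op V" shows "matrix_inv V = conj_transpose V"
proof -
  have 1: "V ** conj_transpose V = mat 1" "conj_transpose V ** V = mat 1"
    using assms by (auto simp: unitary_op_def)
  show ?thesis unfolding matrix_inv_def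
  proof (rule some_equality)
    fix A' assume "V ** A' = mat 1 \<and> A' ** V = mat 1"
    then have "conj_transpose V ** (V ** A') = conj_transpose V" by simp
    then show "A' = conj_transpose V" by (simp add: matrix_mul_assoc 1)
  qed (use 1 in auto)
qed

lemma mat_smult: "(mat c :: complex^'n^'n) *v x = c *s x"
proof -
  have "\<forall>i. (\<Sum>j\<in>UNIV. (if i = j then c else 0) * x $ j) = c * x $ i"
  proof
    fix i
    have "(\<Sum>j\<in>UNIV. (if i = j then c else 0) * x $ j) = (\<Sum>j\<in>UNIV. if i = j then c * x$j else 0)"
      by (rule sum.cong) auto
    then show "(\<Sum>j\<in>UNIV. (if i = j then c else 0) * x $ j) = c * x $ i" by simp
  qed
  then show ?thesis by (simp add: vec_eq_iff matrix_vector_mult_def mat_def)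
qed

lemma norm_smult: "norm (c *s (x::complex^'n)) = cmod c * norm x"
  by (simp add: norm_vec_def L2_set_def norm_mult power_mult_distrib sum_distrib_left[symmetric] real_sqrt_mult)

fun mpow :: "'a::semiring_1^'n^'n \<Rightarrow> nat \<Rightarrow> 'a^'n^'n" where
  "mpow A 0 = mat 1" | "mpow A (Suc k) = A ** mpow A k"

lemma mpow_eig: "A *v b = l *s b \<Longrightarrow> mpow A k *v (b::complex^'n) = l^k *s b"
  by (induction k) (auto simp: matrix_vector_mul_assoc[symmetric] vec.scale vector_smult_assoc mult.commute)

lemma mpow_comm: "A ** mpow A k = mpow A k ** A"
  by (induction k) (simp_all, metis matrix_mul_assoc)

lemma mpow_add: "mpow A (a + b) = mpow A a ** mpow A b"
  by (induction a) (simp_all add: matrix_mul_assoc)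

lemma mpow_mult: "mpow A (a * b) = mpow (mpow A a) b"
  by (induction b) (simp_all add: mpow_add)

lemma ct_mat1: "conj_transpose (mat 1 :: complex^'n^'n) = mat 1"
  by (simp add: conj_transpose_def mat_def vec_eq_iff)

lemma mpow_unitary: "unitary_op A \<Longrightarrow> unitary_op (mpow A k)"
  by (induction k) (simp add: unitary_op_def ct_mat1, simp add: unitary_mult)

lemma unitary_normv: "unitary_op A \<Longrightarrow> norm (A *v x) = norm x"
  by (simp add: unitary_norm unitary_op_def)


definition pe :: "complex^'n^'n \<Rightarrow> complex poly \<Rightarrow> complex^'n \<Rightarrow> complex^'n" where
  "pe A p y = (\<Sum>k\<le>degree p. coeff p k *s (mpow A k *v y))"

lemma pe_bound:
  assumes "degree p \<le> n"
  shows "pe A p y = (\<Sum>k\<le>n. coeff p k *s (mpow A k *v y))"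
  unfolding pe_def
  by (rule sum.mono_neutral_right[symmetric]) (use assms in \<open>auto simp: coeff_eq_0\<close>)

lemma pe_add: "pe A (p + q) y = pe A p y + pe A q y"
proof -
  let ?n = "max (degree p) (degree q)"
  have "degree (p + q) \<le> ?n" by (rule degree_add_le) auto
  then show ?thesis
    by (simp add: pe_bound[of _ ?n] vector_sadd_rdistrib sum.distrib)
qed

lemma pe_smult: "pe A (smult c p) y = c *s pe A p y"
  using degree_smult_le[of c p]
  by (simp add: pe_bound[of _ "degree p"] pe_def[of A p] vec.scale_sum_right vector_smult_assoc)

lemma pe_pCons0: "pe A (pCons 0 q) y = A *v pe A q y"
proof -
  have "pe A (pCons 0 q) y = (\<Sum>k\<le>Suc (degree q). coeff (pCons 0 q) k *s (mpow A k *v y))"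
    by (rule pe_bound) (rule degree_pCons_le)
  also have "\<dots> = (\<Sum>k\<le>degree q. coeff q k *s (mpow A (Suc k) *v y))"
    by (subst sum.atMost_Suc_shift) simp
  also have "\<dots> = A *v pe A q y"
    by (simp add: pe_def vec.sum vec.scale matrix_vector_mul_assoc)
  finally show ?thesis .
qed

lemma pe_monom: "pe A (monom a k) y = a *s (mpow A k *v y)"
proof -
  have "pe A (monom a k) y = (\<Sum>j\<le>k. coeff (monom a k) j *s (mpow A j *v y))"
    by (rule pe_bound) (rule degree_monom_le)
  also have "\<dots> = (\<Sum>j\<le>k. if j = k then a *s (mpow A j *v y) else 0)"
    by (rule sum.cong) auto
  finally show ?thesis by simp
qed

lemma pe_zero[simp]: "pe A 0 y = 0"
  by (simp add: pe_def)

lemma pe_sum: "finite K \<Longrightarrow> pe A (\<Sum>k\<in>K. g k) y = (\<Sum>k\<in>K. pe A (g k) y)"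
  by (induction K rule: finite_induct) (simp_all add: pe_add)

lemma pe_root: "pe A ([:-r, 1:] * q) y = A *v pe A q y - r *s pe A q y"
proof -
  have "[:-r, 1:] * q = smult (-r) q + pCons 0 q" by simp
  then show ?thesis by (simp only: pe_add pe_smult pe_pCons0) (simp add: vector_smult_lneg)
qed

lemma pe_minus: "pe A (p - q) y = pe A p y - pe A q y"
  using pe_add[of A "p - q" q y] by (simp add: algebra_simps)

lemma pe_const: "pe A [:c:] y = c *s y"
  by (simp add: pe_def)

lemma eigen_from_poly:
  fixes A :: "complex^'n^'n"
  shows "p \<noteq> 0 \<Longrightarrow> y \<noteq> 0 \<Longrightarrow> pe A p y = 0 \<Longrightarrow> \<exists>q r. pe A q y \<noteq> 0 \<and> A *v pe A q y = r *s pe A q y"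
proof (induction "degree p" arbitrary: p rule: less_induct)
  case less
  show ?case
  proof (cases "degree p = 0")
    case True
    then have p: "p = [:coeff p 0:]" using degree_0_id by metis
    then have "coeff p 0 \<noteq> 0" using less.prems(1) by auto
    then have "pe A p y \<noteq> 0" using less.prems(2) by (subst p) (simp add: pe_const)
    then show ?thesis using less.prems(3) by simp
  next
    case False
    then have "\<not> constant (poly p)" by (simp add: constant_degree)
    then obtain r where "poly p r = 0" using fundamental_theorem_of_algebra by blast
    then obtain q where pq: "p = [:-r, 1:] * q" by (auto simp: poly_eq_0_iff_dvd elim: dvdE)
    then have q0: "q \<noteq> 0" using less.prems(1) by auto
    have "degree ([:-r, 1:] * q) = degree [:-r,1:] + degree q" by (rule degree_mult_eq) (use q0 in auto)
    then have "degree q < degree ([:-r, 1:] * q)" by simp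
    then have dq: "degree q < degree p" unfolding pq .
    show ?thesis
    proof (cases "pe A q y = 0")
      case True
      then show ?thesis using less.hyps[OF dq q0 less.prems(2)] by blast
    next
      case False
      have "A *v pe A q y - r *s pe A q y = 0" using less.prems(3) unfolding pq pe_root .
      then show ?thesis using False by (intro exI[of _ q] exI[of _ r]) simp
    qed
  qed
qed

lemma poly_annihilator:
  fixes A :: "complex^'n^'n"
  shows "\<exists>p. p \<noteq> 0 \<and> pe A p y = 0"
proof -
  define n where "n = CARD('n)"
  define f where "f k = mpow A k *v y" for k
  show ?thesis
  proof (cases "inj_on f {..n}")
    case False
    then obtain i j where ij: "i \<noteq> j" "f i = f j" by (auto simp: inj_on_def)
    define p where "p = monom 1 i + smult (-1) (monom (1::complex) j)"
    have "coeff p i = 1" using ij by (simp add: p_def)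
    then have "p \<noteq> 0" by auto
    moreover have "pe A p y = 0" using ij
      by (simp add: p_def pe_minus pe_monom f_def)
    ultimately show ?thesis by blast
  next
    case True
    define T where "T = f ` {..n}"
    have cT: "card T = Suc n" using True by (simp add: T_def card_image)
    have "\<not> vec.independent T"
    proof
      assume "vec.independent T"
      then have "card T \<le> vec.dim (UNIV :: (complex^'n) set)"
        by (intro vec.independent_card_le_dim) auto
      then show False using cT by (simp add: card_cart_basis n_def)
    qed
    moreover have "finite T" by (simp add: T_def)
    ultimately obtain u v where uv: "v \<in> T" "u v \<noteq> 0" "(\<Sum>v\<in>T. u v *s v) = 0"
      using vec.dependent_finite by blast
    define p where "p = (\<Sum>k\<le>n. monom (u (f k)) k)"
    obtain k0 where k0: "k0 \<le> n" "v = f k0" using uv(1) by (auto simp: T_def)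
    have "coeff p k0 = (\<Sum>k\<le>n. if k = k0 then u (f k) else 0)"
      by (simp add: p_def coeff_sum)
    also have "\<dots> = u v" using k0 by simp
    finally have "p \<noteq> 0" using uv(2) by auto
    moreover have "pe A p y = (\<Sum>k\<le>n. u (f k) *s f k)"
      by (simp add: p_def pe_sum pe_monom f_def)
    moreover have "(\<Sum>k\<le>n. u (f k) *s f k) = (\<Sum>v\<in>T. u v *s v)"
      unfolding T_def by (rule sum.reindex[OF True, symmetric, unfolded comp_def])
    ultimately show ?thesis using uv(3) by auto
  qed
qed



definition ONE :: "complex^'n^'n \<Rightarrow> (complex^'n) set \<Rightarrow> bool" where
  "ONE W B \<longleftrightarrow> finite B \<and> (\<forall>b\<in>B. hip b b = 1) \<and> (\<forall>b\<in>B. \<forall>c\<in>B. b \<noteq> c \<longrightarrow> hip b c = 0)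
     \<and> (\<forall>b\<in>B. W *v b = hip (W *v b) b *s b)"

lemma hip_sum_right: "hip x (\<Sum>b\<in>B. f b) = (\<Sum>b\<in>B. hip x (f b))"
  by (subst hip_cnj) (simp add: hip_sum_left, subst hip_cnj, simp)

lemma hip_basis:
  assumes "ONE W B" "b \<in> B"
  shows "hip (\<Sum>c\<in>B. f c *s c) b = f b"
proof -
  have "hip (\<Sum>c\<in>B. f c *s c) b = (\<Sum>c\<in>B. if c = b then f b else 0)"
    unfolding hip_sum_left hip_smult_left
    by (rule sum.cong) (use assms in \<open>auto simp: ONE_def\<close>)
  also have "\<dots> = f b" using assms by (simp add: ONE_def)
  finally show ?thesis .
qed

lemma ONE_indep: assumes "ONE W B" shows "vec.independent B"
proof (rule vec.independent_if_scalars_zero)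
  show "finite B" using assms by (simp add: ONE_def)
  fix f x assume 1: "(\<Sum>x\<in>B. f x *s x) = 0" and x: "x \<in> B"
  have "hip (\<Sum>x\<in>B. f x *s x) x = f x" by (rule hip_basis[OF assms x])
  then show "f x = 0" using 1 by simp
qed

lemma ONE_card: "ONE W (B :: (complex^'n) set) \<Longrightarrow> card B \<le> CARD('n)"
  using vec.independent_card_le_dim[of B UNIV, OF _ ONE_indep] by (simp add: card_cart_basis)

lemma ONE_norm:
  assumes "ONE W B"
  shows "(norm (\<Sum>b\<in>B. c b *s b))^2 = (\<Sum>b\<in>B. (cmod (c b))^2)"
proof -
  let ?S = "\<Sum>b\<in>B. c b *s b"
  have "hip ?S ?S = (\<Sum>b\<in>B. hip ?S (c b *s b))"
    by (rule hip_sum_right)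
  also have "\<dots> = (\<Sum>b\<in>B. cnj (c b) * hip ?S b)"
    by (simp add: hip_smult_right)
  also have "\<dots> = (\<Sum>b\<in>B. complex_of_real ((cmod (c b))^2))"
    by (rule sum.cong) (use assms in \<open>auto simp: hip_basis, metis complex_norm_square mult.commute of_real_power\<close>)
  finally have "complex_of_real ((norm ?S)^2) = complex_of_real (\<Sum>b\<in>B. (cmod (c b))^2)"
    by (simp add: hip_self)
  then show ?thesis using of_real_eq_iff by blast
qed

lemma eig_adj:
  assumes "unitary_op W" "W *v b = l *s b" "b \<noteq> 0"
  shows "conj_transpose W *v b = cnj l *s b" "cmod l = 1"
proof -
  have "norm (l *s b) = norm b" using assms(1,2) unitary_normv by metis
  then show l1: "cmod l = 1" using assms(3) by (simp add: norm_smult)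
  have "conj_transpose W *v (W *v b) = b"
    using assms(1) by (simp add: matrix_vector_mul_assoc unitary_op_def)
  then have "b = l *s (conj_transpose W *v b)" by (simp add: assms(2) vec.scale)
  then have "cnj l *s b = (cnj l * l) *s (conj_transpose W *v b)"
    by (metis vector_smult_assoc)
  also have "cnj l * l = 1" using l1
    by (metis complex_norm_square mult.commute of_real_1 one_power2)
  finally show "conj_transpose W *v b = cnj l *s b" by simp
qed

lemma ONE_ne0: "ONE W B \<Longrightarrow> b \<in> B \<Longrightarrow> b \<noteq> 0"
  by (auto simp: ONE_def)

lemma spectral:
  assumes W: "unitary_op W"
  shows "\<exists>B. ONE W B \<and> (\<forall>x. x = (\<Sum>b\<in>B. hip x b *s b))"
proof -
  have "ONE W {}" by (simp add: ONE_def)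
  then obtain B where B: "ONE W B" and mx: "\<And>B'. ONE W B' \<Longrightarrow> card B' \<le> card B"
    using ex_has_greatest_nat[of "ONE W" "{}" card "Suc CARD('n)"] ONE_card
    by (metis less_Suc_eq_le)
  have "x = (\<Sum>b\<in>B. hip x b *s b)" for x
  proof (rule ccontr)
    define y where "y = x - (\<Sum>b\<in>B. hip x b *s b)"
    assume "x \<noteq> (\<Sum>b\<in>B. hip x b *s b)"
    then have y0: "y \<noteq> 0" by (simp add: y_def)
    have yp: "hip y c = 0" if "c \<in> B" for c
      using that B by (simp add: y_def hip_diff_left hip_basis)
    obtain p where "p \<noteq> 0" "pe W p y = 0" using poly_annihilator by blast
    then obtain q r where z0: "pe W q y \<noteq> 0" and zr: "W *v pe W q y = r *s pe W q y"
      using eigen_from_poly y0 by blast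
    define z where "z = pe W q y"
    have pk: "hip (mpow W k *v y) c = 0" if "c \<in> B" for k c
    proof (induction k)
      case 0 then show ?case using yp that by simp
    next
      case (Suc k)
      have ce: "W *v c = hip (W *v c) c *s c" using B that by (auto simp: ONE_def)
      have "hip (mpow W (Suc k) *v y) c = hip (mpow W k *v y) (conj_transpose W *v c)"
        by (simp add: matrix_vector_mul_assoc[symmetric] hip_adj)
      also have "\<dots> = 0"
        using eig_adj(1)[OF W ce ONE_ne0[OF B that]] Suc by (simp add: hip_smult_right)
      finally show ?case .
    qed
    have zp: "hip z c = 0" if "c \<in> B" for c
      unfolding z_def pe_def hip_sum_left hip_smult_left using pk[OF that] by simp
    define e where "e = complex_of_real (1 / norm z) *s z"
    have nz: "norm z \<noteq> 0" using z0 z_def by simp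
    have ee: "hip e e = 1"
      using nz by (simp only: e_def hip_smult_left hip_smult_right hip_self[of z]) (simp add: power2_eq_square)
    have ep: "hip e c = 0" "hip c e = 0" if "c \<in> B" for c
      using zp[OF that] by (simp_all add: e_def hip_smult_left hip_smult_right, subst hip_cnj, simp)
    have We: "W *v e = r *s e" using zr by (simp add: e_def vec.scale z_def vector_smult_assoc mult.commute)
    then have We': "W *v e = hip (W *v e) e *s e" by (simp add: hip_smult_left ee)
    have eB: "e \<notin> B" using ep ee by force
    have "ONE W (insert e B)"
      using B ee ep We' unfolding ONE_def by auto
    then have "card (insert e B) \<le> card B" by (rule mx)
    then show False using eB B by (simp add: ONE_def)
  qed
  then show ?thesis using B by blast
qed



lemma pow_diff_bound:
  fixes x y :: complex
  assumes "cmod x = 1" "cmod y = 1"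
  shows "cmod (x^n - y^n) \<le> n * cmod (x - y)"
proof (induction n)
  case 0 then show ?case by simp
next
  case (Suc n)
  have "x^Suc n - y^Suc n = x * (x^n - y^n) + (x - y) * y^n" by (simp add: algebra_simps)
  then have "cmod (x^Suc n - y^Suc n) \<le> cmod (x * (x^n - y^n)) + cmod ((x - y) * y^n)"
    by (metis norm_triangle_ineq)
  also have "\<dots> = cmod (x^n - y^n) + cmod (x - y)"
    using assms by (simp add: norm_mult norm_power)
  finally show ?case using Suc by (simp add: algebra_simps)
qed

lemma tri: "cmod (a - c) \<le> cmod (a - b) + cmod (b - c)"
  using norm_triangle_ineq[of "a - b" "b - c"] by simp

lemma funpow_in: "(\<And>m. m \<in> S \<Longrightarrow> g m \<in> S) \<Longrightarrow> m \<in> S \<Longrightarrow> (g^^j) m \<in> S"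
  by (induction j) auto

lemma chain_bound:
  fixes g :: "complex \<Rightarrow> complex"
  assumes g: "\<And>m. m \<in> S \<Longrightarrow> g m \<in> S \<and> cmod (m^3 - (g m)^2) \<le> e"
    and u: "\<And>m. m \<in> S \<Longrightarrow> cmod m = 1"
  shows "m \<in> S \<Longrightarrow> cmod (m^(3^j) - ((g^^j) m)^(2^j)) \<le> 3^j * e"
proof (induction j arbitrary: m)
  case 0
  then have "0 \<le> e" using g[OF 0] by (meson norm_ge_zero order_trans)
  then show ?case by simp
next
  case (Suc j)
  let ?n = "g m"
  let ?r = "(g^^j) ?n"
  have n: "?n \<in> S" using g Suc.prems by blast
  have r: "(g^^Suc j) m = ?r" by (simp add: funpow_Suc_right del: funpow.simps)
  have e1: "cmod ((m^3)^(3^j) - (?n^2)^(3^j)) \<le> 3^j * e"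
  proof -
    have "cmod ((m^3)^(3^j) - (?n^2)^(3^j)) \<le> 3^j * cmod (m^3 - ?n^2)"
      by (rule order_trans[OF pow_diff_bound]) (use u Suc.prems n in \<open>auto simp: norm_power\<close>)
    also have "\<dots> \<le> 3^j * e" using g Suc.prems by (intro mult_left_mono) auto
    finally show ?thesis .
  qed
  have e2: "cmod ((?n^(3^j))^2 - (?r^(2^j))^2) \<le> 2 * (3^j * e)"
  proof -
    have "cmod ((?n^(3^j))^2 - (?r^(2^j))^2) \<le> 2 * cmod (?n^(3^j) - ?r^(2^j))"
      by (rule order_trans[OF pow_diff_bound]) (use u n funpow_in[of S g] g in \<open>auto simp: norm_power\<close>)
    also have "\<dots> \<le> 2 * (3^j * e)" using Suc.IH[OF n] by simp
    finally show ?thesis .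
  qed
  have eq1: "m^(3^Suc j) = (m^3)^(3^j)" by (simp add: power_mult[symmetric])
  have eq2: "(?n^2)^(3^j) = (?n^(3^j))^2" by (simp add: power_mult[symmetric] mult.commute)
  have eq3: "?r^(2^Suc j) = (?r^(2^j))^2" by (simp add: power_mult[symmetric] mult.commute)
  have "cmod (m^(3^Suc j) - ?r^(2^Suc j)) \<le> cmod ((m^3)^(3^j) - (?n^2)^(3^j)) + cmod ((?n^(3^j))^2 - (?r^(2^j))^2)"
    unfolding eq1 eq3 eq2[symmetric] by (rule tri)
  also have "\<dots> \<le> 3^Suc j * e" using e1 e2 by simp
  finally show ?case using r by simp
qed


lemma three_pow_bound: "k \<ge> 1 \<Longrightarrow> (3::real)^k \<le> 3 * (3^k - 2^k)"
proof -
  assume "k \<ge> 1"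
  then obtain k' where k: "k = Suc k'" by (cases k) auto
  have "(2::real)^k' \<le> 3^k'" by (rule power_mono) auto
  then show ?thesis unfolding k by simp
qed

lemma scalar_main:
  fixes g :: "complex \<Rightarrow> complex"
  assumes fin: "finite S" and cS: "card S \<le> d"
    and g: "\<And>m. m \<in> S \<Longrightarrow> g m \<in> S \<and> cmod (m^3 - (g m)^2) \<le> e"
    and u: "\<And>m. m \<in> S \<Longrightarrow> cmod m = 1"
    and m: "m \<in> S"
  shows "cmod (m^(N_const d) - 1) \<le> 4 * real (N_const d) * e"
proof -
  have e0: "0 \<le> e" using g[OF m] by (meson norm_ge_zero order_trans)
  define L where "L = Lcm ((\<lambda>k. 3^k - 2^k) ` {1..d} :: nat set)"
  have N: "N_const d = 3^d * L" by (simp add: N_const_def L_def)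
  define f where "f i = (g^^i) m" for i
  have fS: "f i \<in> S" for i unfolding f_def by (rule funpow_in[of S g]) (use g m in auto)
  have "\<not> inj_on f {..card S}"
  proof
    assume "inj_on f {..card S}"
    then have "card {..card S} \<le> card S" by (rule card_inj_on_le) (use fS fin in auto)
    then show False by simp
  qed
  then obtain i j where ij: "i \<le> card S" "j \<le> card S" "i \<noteq> j" "f i = f j"
    by (auto simp: inj_on_def)
  define a where "a = min i j"
  define b where "b = max i j"
  have ab: "a < b" "b \<le> card S" "f a = f b" using ij by (auto simp: a_def b_def min_def max_def)
  define k where "k = b - a"
  define n where "n = f a"
  have k1: "1 \<le> k" and kd: "k \<le> d" and ad: "a \<le> d" using ab cS by (auto simp: k_def)
  have cyc: "(g^^k) n = n"
  proof -
    have "(g^^k) n = (g^^(k + a)) m" by (simp add: n_def f_def funpow_add)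
    also have "k + a = b" using ab by (simp add: k_def)
    finally show ?thesis using ab by (simp add: n_def f_def)
  qed
  have nS: "n \<in> S" by (simp add: n_def fS)
  have un: "cmod n = 1" using u nS by simp
  have c1: "cmod (n^(3^k) - n^(2^k)) \<le> 3^k * e"
    using chain_bound[of S g e n k, OF g u nS] cyc by simp
  define t where "t = (3::nat)^k - 2^k"
  have "(2::nat)^k \<le> 3^k" by (rule power_mono) auto
  then have t3: "(3::nat)^k = 2^k + t" by (simp add: t_def)
  have c2: "cmod (n^t - 1) \<le> 3^k * e"
  proof -
    have "n^(3^k) - n^(2^k) = n^(2^k) * (n^t - 1)" by (simp add: t3 power_add algebra_simps)
    then have "cmod (n^(3^k) - n^(2^k)) = cmod (n^t - 1)" by (simp add: norm_mult norm_power un)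
    then show ?thesis using c1 by simp
  qed
  have "t dvd L" unfolding L_def t_def by (rule dvd_Lcm) (use k1 kd in auto)
  then obtain q where Lq: "L = t * q" by (auto elim: dvdE)
  have c3: "cmod (n^L - 1) \<le> q * (3^k * e)"
  proof -
    have "cmod ((n^t)^q - 1^q) \<le> q * cmod (n^t - 1)"
      by (rule pow_diff_bound) (auto simp: norm_power un)
    also have "\<dots> \<le> q * (3^k * e)" using c2 by (intro mult_left_mono) auto
    finally show ?thesis by (simp add: Lq power_mult)
  qed
  have c4: "cmod (m^(3^a) - n^(2^a)) \<le> 3^a * e"
    using chain_bound[of S g e m a, OF g u m] by (simp add: n_def f_def)
  have um: "cmod m = 1" using u m by simp
  have c5: "cmod (m^(3^a * L) - n^(2^a * L)) \<le> L * (3^a * e)"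
  proof -
    have "cmod ((m^(3^a))^L - (n^(2^a))^L) \<le> L * cmod (m^(3^a) - n^(2^a))"
      by (rule pow_diff_bound) (auto simp: norm_power un um)
    also have "\<dots> \<le> L * (3^a * e)" using c4 by (intro mult_left_mono) auto
    finally show ?thesis by (simp add: power_mult)
  qed
  have c6: "cmod (n^(2^a * L) - 1) \<le> 2^a * (q * (3^k * e))"
  proof -
    have "cmod ((n^L)^(2^a) - 1^(2^a)) \<le> (2^a) * cmod (n^L - 1)"
      by (rule order_trans[OF pow_diff_bound]) (auto simp: norm_power un)
    also have "\<dots> \<le> 2^a * (q * (3^k * e))" using c3 by (intro mult_left_mono) auto
    finally show ?thesis by (simp add: power_mult[symmetric] mult.commute)
  qed
  have c7: "cmod (m^(3^a * L) - 1) \<le> L * (3^a * e) + 2^a * (q * (3^k * e))"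
    using tri[of "m^(3^a * L)" 1 "n^(2^a * L)"] c5 c6 by linarith
  have Nsplit: "N_const d = 3^a * L * 3^(d - a)"
    using ad by (simp add: N power_add[symmetric])
  have c8: "cmod (m^(N_const d) - 1) \<le> 3^(d-a) * (L * (3^a * e) + 2^a * (q * (3^k * e)))"
  proof -
    have "cmod ((m^(3^a * L))^(3^(d-a)) - 1^(3^(d-a))) \<le> (3^(d-a)) * cmod (m^(3^a * L) - 1)"
      by (rule order_trans[OF pow_diff_bound]) (auto simp: norm_power um)
    also have "\<dots> \<le> 3^(d-a) * (L * (3^a * e) + 2^a * (q * (3^k * e)))"
      using c7 by (intro mult_left_mono) auto
    finally show ?thesis by (simp add: Nsplit power_mult)
  qed
  have p1: "(3::real)^(d-a) * 3^a = 3^d" using ad by (simp add: power_add[symmetric])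
  have p2: "(2::real)^a \<le> 3^a" by (rule power_mono) auto
  have p3: "real q * 3^k \<le> 3 * real L"
  proof -
    have "real t = 3^k - 2^k" using t3 by (simp add: t_def of_nat_diff)
    then have "(3::real)^k \<le> 3 * real t" using three_pow_bound[OF k1] by simp
    then have "real q * 3^k \<le> real q * (3 * real t)" by (intro mult_left_mono) auto
    then show ?thesis by (simp add: Lq algebra_simps)
  qed
  have "3^(d-a) * (L * (3^a * e) + 2^a * (q * (3^k * e)))
      = (3^(d-a) * 3^a) * L * e + 3^(d-a) * 2^a * (q * 3^k) * e" by (simp add: algebra_simps)
  also have "\<dots> \<le> (3^(d-a) * 3^a) * L * e + 3^(d-a) * 3^a * (3 * L) * e"
  proof -
    have "(2::real)^a * (real q * 3^k) \<le> 3^a * (3 * real L)"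
      by (rule mult_mono[OF p2 p3]) auto
    then show ?thesis using e0
      by (intro add_left_mono mult_right_mono) (auto simp: mult.assoc intro!: mult_left_mono)
  qed
  also have "\<dots> = 4 * real (N_const d) * e" using p1 by (simp add: N algebra_simps)
  finally show ?thesis using c8 by linarith
qed


lemma odd_diff_pow: "k \<ge> 1 \<Longrightarrow> odd ((3::nat)^k - 2^k)"
proof -
  assume k: "k \<ge> 1"
  have "(2::nat)^k \<le> 3^k" by (rule power_mono) auto
  then have eq: "(3::nat)^k = 2^k + (3^k - 2^k)" by simp
  have "odd ((3::nat)^k)" by simp
  moreover have "even ((2::nat)^k)" using k by simp
  ultimately show ?thesis by (metis eq even_add)
qed

lemma N_odd: "odd (N_const d)"
proof -
  define A where "A = (\<lambda>k. (3::nat)^k - 2^k) ` {1..d}"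
  have fA: "finite A" by (simp add: A_def)
  have oA: "\<forall>a\<in>A. odd a"
  proof
    fix a assume "a \<in> A"
    then obtain k where k: "k \<ge> 1" "a = 3^k - 2^k" by (auto simp: A_def)
    have "odd ((3::nat)^k - 2^k)" using k(1) by (rule odd_diff_pow)
    then show "odd a" unfolding k(2) .
  qed
  have "Lcm A dvd prod id A" by (rule Lcm_least) (use fA in \<open>auto intro: dvd_prodI[of A _ id, simplified]\<close>)
  moreover have "odd (prod id A)" using fA oA by (simp add: even_prod_iff)
  ultimately have "odd (Lcm A)" by (meson dvd_trans)
  then show ?thesis by (simp add: N_const_def A_def)
qed



lemma ONE_apply:
  assumes B: "ONE W B" and ex: "\<And>x. x = (\<Sum>b\<in>B. hip x b *s b)"
    and A: "\<And>b. b \<in> B \<Longrightarrow> A *v b = \<phi> b *s b"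
  shows "(norm (A *v x))^2 = (\<Sum>b\<in>B. (cmod (hip x b))^2 * (cmod (\<phi> b))^2)"
proof -
  have "A *v x = A *v (\<Sum>b\<in>B. hip x b *s b)" using arg_cong[OF ex[of x]] .
  also have "\<dots> = (\<Sum>b\<in>B. (hip x b * \<phi> b) *s b)"
    by (simp add: vec.sum vec.scale) (rule sum.cong, auto simp: A vector_smult_assoc)
  finally have "(norm (A *v x))^2 = (\<Sum>b\<in>B. (cmod (hip x b * \<phi> b))^2)"
    using ONE_norm[OF B] by simp
  then show ?thesis by (simp add: norm_mult power_mult_distrib)
qed

lemma ONE_normx:
  assumes B: "ONE W B" and ex: "\<And>x. x = (\<Sum>b\<in>B. hip x b *s b)"
  shows "(norm x)^2 = (\<Sum>b\<in>B. (cmod (hip x b))^2)"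
  using ONE_apply[OF B ex, of "mat 1" "\<lambda>b. 1" x] by simp

lemma ONE_upper:
  assumes B: "ONE W B" and ex: "\<And>x. x = (\<Sum>b\<in>B. hip x b *s b)"
    and A: "\<And>b. b \<in> B \<Longrightarrow> A *v b = \<phi> b *s b"
    and M: "\<And>b. b \<in> B \<Longrightarrow> cmod (\<phi> b) \<le> M" "0 \<le> M"
  shows "norm (A *v x) \<le> M * norm x"
proof -
  have "(norm (A *v x))^2 = (\<Sum>b\<in>B. (cmod (hip x b))^2 * (cmod (\<phi> b))^2)"
    by (rule ONE_apply[OF B ex A])
  also have "\<dots> \<le> (\<Sum>b\<in>B. (cmod (hip x b))^2 * M^2)"
    by (intro sum_mono mult_left_mono power_mono) (auto simp: M)
  also have "\<dots> = (M * norm x)^2"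
    by (simp add: ONE_normx[OF B ex] sum_distrib_left power_mult_distrib mult.commute)
  finally show ?thesis
    by (rule power2_le_imp_le) (use M in simp)
qed

lemma ONE_lower:
  assumes B: "ONE W B" and ex: "\<And>x. x = (\<Sum>b\<in>B. hip x b *s b)"
    and A: "\<And>b. b \<in> B \<Longrightarrow> A *v b = \<phi> b *s b"
    and x: "norm x = 1" and e: "norm (A *v x) \<le> e"
  shows "\<exists>b\<in>B. cmod (\<phi> b) \<le> e"
proof (rule ccontr)
  assume "\<not> (\<exists>b\<in>B. cmod (\<phi> b) \<le> e)"
  then have gt: "\<And>b. b \<in> B \<Longrightarrow> e < cmod (\<phi> b)" by auto
  have e0: "0 \<le> e" using e norm_ge_zero order_trans by blast
  have s1: "(\<Sum>b\<in>B. (cmod (hip x b))^2) = 1" using ONE_normx[OF B ex, of x] x by simp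
  have fin: "finite B" using B by (simp add: ONE_def)
  obtain b0 where b0: "b0 \<in> B" "hip x b0 \<noteq> 0"
  proof (rule ccontr)
    assume "\<not> thesis"
    then have "\<forall>b\<in>B. hip x b = 0" using that by blast
    then show False using s1 by simp
  qed
  have "(\<Sum>b\<in>B. (cmod (hip x b))^2 * e^2) < (\<Sum>b\<in>B. (cmod (hip x b))^2 * (cmod (\<phi> b))^2)"
  proof (rule sum_strict_mono_ex1[OF fin])
    show "\<forall>b\<in>B. (cmod (hip x b))^2 * e^2 \<le> (cmod (hip x b))^2 * (cmod (\<phi> b))^2"
    proof
      fix b assume b: "b \<in> B"
      have "e^2 \<le> (cmod (\<phi> b))^2" by (rule power_mono) (use gt[OF b] e0 in auto)
      then show "(cmod (hip x b))^2 * e^2 \<le> (cmod (hip x b))^2 * (cmod (\<phi> b))^2"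
        by (rule mult_left_mono) simp
    qed
    show "\<exists>b\<in>B. (cmod (hip x b))^2 * e^2 < (cmod (hip x b))^2 * (cmod (\<phi> b))^2"
    proof (rule bexI[OF _ b0(1)])
      have "e^2 < (cmod (\<phi> b0))^2" using gt[OF b0(1)] e0 by (intro power_strict_mono) auto
      moreover have "0 < (cmod (hip x b0))^2" using b0 by simp
      ultimately show "(cmod (hip x b0))^2 * e^2 < (cmod (hip x b0))^2 * (cmod (\<phi> b0))^2"
        by (rule mult_strict_left_mono)
    qed
  qed
  also have "\<dots> = (norm (A *v x))^2" by (rule ONE_apply[OF B ex A, symmetric])
  also have "\<dots> \<le> e^2" using e by (intro power_mono) auto
  finally show False using s1 by (simp add: sum_distrib_right[symmetric])
qed

lemma tele:
  assumes "unitary_op A" "unitary_op B" "\<And>x. norm ((A - B) *v x) \<le> e * norm x"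
  shows "norm ((mpow A m - mpow B m) *v x) \<le> m * e * norm x"
proof (induction m arbitrary: x)
  case 0 then show ?case by simp
next
  case (Suc m)
  have eq: "(mpow A (Suc m) - mpow B (Suc m)) *v x
      = A *v ((mpow A m - mpow B m) *v x) + (A - B) *v (mpow B m *v x)"
    by (simp add: matrix_vector_mult_diff_rdistrib matrix_vector_mul_assoc[symmetric] vec.diff)
  have "norm ((mpow A (Suc m) - mpow B (Suc m)) *v x)
      \<le> norm (A *v ((mpow A m - mpow B m) *v x)) + norm ((A - B) *v (mpow B m *v x))"
    unfolding eq by (rule norm_triangle_ineq)
  also have "\<dots> \<le> norm ((mpow A m - mpow B m) *v x) + e * norm (mpow B m *v x)"
    unfolding unitary_normv[OF assms(1)] by (rule add_left_mono) (rule assms(3))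
  also have "\<dots> \<le> m * e * norm x + e * norm x"
    using Suc.IH unitary_normv[OF mpow_unitary[OF assms(2)]] by simp
  finally show ?case by (simp add: algebra_simps)
qed



theorem theorem2:
  fixes d :: nat and U V :: "complex^'n^'n" and \<epsilon> :: real
  assumes "d \<ge> 3"
    and "CARD('n) \<le> d"
    and "unitary_op U" and "unitary_op V"
    and "op_norm (matrix_inv V ** U ** U ** V - U ** U ** U) < \<epsilon>"
    and "0 < \<epsilon>" and "\<epsilon> < 1 / (6 * 3 ^ d * real d * real (N_const d))"
  shows "op_norm (U ** matrix_inv V ** U ** V - matrix_inv V ** U ** V ** U)
           < 4 * real d ^ 3 * real (N_const d) * \<epsilon>"
proof -
  note d3 = assms(1) and cardn = assms(2) and uU = assms(3) and uV = assms(4)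
  define Vi where "Vi = conj_transpose V"
  have Vi: "matrix_inv V = Vi" using unitary_inv[OF uV] by (simp add: Vi_def)
  have VVi: "V *v (Vi *v y) = y" for y
    using uV by (simp add: Vi_def unitary_op_def matrix_vector_mul_assoc)
  define W where "W = Vi ** U ** V"
  have uW: "unitary_op W" unfolding W_def Vi_def
    by (intro unitary_mult unitary_ct uU uV)
  have Wv: "W *v y = Vi *v (U *v (V *v y))" for y
    by (simp add: W_def matrix_vector_mul_assoc[symmetric])
  define D where "D = matrix_inv V ** U ** U ** V - U ** U ** U"
  define e0 where "e0 = op_norm D"
  have e0e: "e0 < \<epsilon>" using assms(5) by (simp add: e0_def D_def)
  have e0pos: "0 \<le> e0" unfolding e0_def op_norm_def
    by (rule onorm_pos_le) (rule matrix_vector_mul_bounded_linear)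
  have Dx: "norm (D *v x) \<le> e0 * norm x" for x
    unfolding e0_def op_norm_def by (rule onorm) (rule matrix_vector_mul_bounded_linear)
  have Deq: "D *v x = mpow W 2 *v x - mpow U 3 *v x" for x
    by (simp add: D_def Vi numeral_2_eq_2 numeral_3_eq_3 matrix_vector_mult_diff_rdistrib
        matrix_vector_mul_assoc[symmetric] Wv VVi)
  obtain B where B: "ONE W B" and ex: "\<And>x. x = (\<Sum>b\<in>B. hip x b *s b)"
    using spectral[OF uW] by blast
  define lam where "lam b = hip (W *v b) b" for b
  have eigB: "W *v b = lam b *s b" if "b \<in> B" for b
    using B that by (simp add: ONE_def lam_def)
  have unitlam: "cmod (lam b) = 1" if "b \<in> B" for b
    using eig_adj(2)[OF uW eigB[OF that] ONE_ne0[OF B that]] .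
  define S where "S = lam ` B"
  have finS: "finite S" using B by (simp add: S_def ONE_def)
  have cardS: "card S \<le> d"
    using card_image_le[of B lam] ONE_card[OF B] cardn B by (simp add: S_def ONE_def)
  have unitS: "\<And>m. m \<in> S \<Longrightarrow> cmod m = 1" using unitlam by (auto simp: S_def)
  have gstep: "\<exists>n\<in>S. cmod (m^3 - n^2) \<le> e0" if mS: "m \<in> S" for m
  proof -
    obtain b0 where b0: "b0 \<in> B" "m = lam b0" using mS by (auto simp: S_def)
    define x where "x = V *v b0"
    have nb0: "norm b0 = 1"
    proof -
      have "hip b0 b0 = 1" using B b0 by (simp add: ONE_def)
      then have "complex_of_real ((norm b0)^2) = 1" by (metis hip_self)
      then have "(norm b0)^2 = 1" by (metis of_real_eq_1_iff)
      then show ?thesis using norm_ge_zero[of b0] by (auto simp: power2_eq_1_iff)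
    qed
    have nx: "norm x = 1" by (simp add: x_def unitary_normv[OF uV] nb0)
    have Ux: "U *v x = m *s x"
    proof -
      have "U *v x = V *v (W *v b0)" by (simp add: x_def Wv VVi)
      also have "\<dots> = m *s x" by (simp add: eigB[OF b0(1)] b0(2) x_def vec.scale)
      finally show ?thesis .
    qed
    have U3: "mpow U 3 *v x = m^3 *s x" by (rule mpow_eig[OF Ux])
    define A where "A = mpow W 2 - mat (m^3)"
    have Ab: "A *v b = ((lam b)^2 - m^3) *s b" if "b \<in> B" for b
      by (simp add: A_def matrix_vector_mult_diff_rdistrib mat_smult mpow_eig[OF eigB[OF that]]
          vec.scale_left_diff_distrib)
    have "A *v x = D *v x" by (simp add: A_def matrix_vector_mult_diff_rdistrib mat_smult Deq U3)
    then have "norm (A *v x) \<le> e0" using Dx[of x] nx by simp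
    then obtain b where b: "b \<in> B" "cmod ((lam b)^2 - m^3) \<le> e0"
      using ONE_lower[OF B ex Ab nx] by blast
    show ?thesis using b by (intro bexI[of _ "lam b"]) (auto simp: S_def norm_minus_commute)
  qed
  then obtain g where g: "\<And>m. m \<in> S \<Longrightarrow> g m \<in> S \<and> cmod (m^3 - (g m)^2) \<le> e0"
    by metis
  define N where "N = N_const d"
  have Nb: "cmod ((lam b)^N - 1) \<le> 4 * real N * e0" if "b \<in> B" for b
    unfolding N_def by (rule scalar_main[OF finS cardS g unitS]) (use that in \<open>auto simp: S_def\<close>)
  have E1: "norm ((mpow W (N + 1) - W) *v y) \<le> (4 * real N * e0) * norm y" for y
  proof (rule ONE_upper[OF B ex])
    show "(mpow W (N + 1) - W) *v b = ((lam b)^(N+1) - lam b) *s b" if "b \<in> B" for b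
    proof -
      have h: "mpow W (N+1) *v b = (lam b)^(N+1) *s b" by (rule mpow_eig[OF eigB[OF that]])
      show ?thesis
        by (simp only: matrix_vector_mult_diff_rdistrib h eigB[OF that] vec.scale_left_diff_distrib)
    qed
    show "cmod ((lam b)^(N+1) - lam b) \<le> 4 * real N * e0" if "b \<in> B" for b
    proof -
      have "(lam b)^(N+1) - lam b = lam b * ((lam b)^N - 1)" by (simp add: algebra_simps)
      then show ?thesis using Nb[OF that] unitlam[OF that] by (simp add: norm_mult)
    qed
    show "0 \<le> 4 * real N * e0" using e0pos by simp
  qed
  have oddN: "odd N" by (simp add: N_def N_odd)
  define k where "k = (N + 1) div 2"
  have k2: "N + 1 = 2 * k" using oddN by (simp add: k_def)
  have kN: "real k \<le> real N" using oddN k2 by (cases N) auto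
  have N1: "1 \<le> real N" using oddN by (cases N) auto
  define P where "P = mpow U (3 * k)"
  have E2: "norm ((mpow W (N + 1) - P) *v y) \<le> k * e0 * norm y" for y
  proof -
    have "norm ((mpow (mpow W 2) k - mpow (mpow U 3) k) *v y) \<le> k * e0 * norm y"
      by (rule tele[OF mpow_unitary[OF uW] mpow_unitary[OF uU]])
        (simp add: matrix_vector_mult_diff_rdistrib Deq[symmetric] Dx)
    moreover have "mpow W (N+1) = mpow (mpow W 2) k" by (simp only: k2 mpow_mult)
    moreover have "P = mpow (mpow U 3) k" by (simp only: P_def mpow_mult)
    ultimately show ?thesis by simp
  qed
  define c where "c = 4 * real N * e0 + k * e0"
  have F: "norm (W *v y - P *v y) \<le> c * norm y" for y
  proof -
    have "W *v y - P *v y = - ((mpow W (N + 1) - W) *v y) + (mpow W (N + 1) - P) *v y"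
      by (simp add: matrix_vector_mult_diff_rdistrib)
    then have "norm (W *v y - P *v y) \<le> norm ((mpow W (N + 1) - W) *v y) + norm ((mpow W (N + 1) - P) *v y)"
      by (metis norm_minus_cancel norm_triangle_ineq)
    also have "\<dots> \<le> c * norm y" using E1[of y] E2[of y] by (simp add: c_def algebra_simps)
    finally show ?thesis .
  qed
  have comm: "U *v (P *v y) = P *v (U *v y)" for y
    by (simp add: matrix_vector_mul_assoc P_def mpow_comm)
  define G where "G = U ** matrix_inv V ** U ** V - matrix_inv V ** U ** V ** U"
  have Gx: "norm (G *v x) \<le> (2 * c) * norm x" for x
  proof -
    have "G *v x = U *v (W *v x) - W *v (U *v x)"
      by (simp add: G_def Vi matrix_vector_mult_diff_rdistrib matrix_vector_mul_assoc[symmetric] Wv)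
    also have "\<dots> = U *v (W *v x - P *v x) - (W *v (U *v x) - P *v (U *v x))"
      by (simp add: vec.diff comm)
    finally have "norm (G *v x) \<le> norm (U *v (W *v x - P *v x)) + norm (W *v (U *v x) - P *v (U *v x))"
      by (metis norm_triangle_ineq4)
    also have "\<dots> \<le> c * norm x + c * norm (U *v x)"
    proof (rule add_mono)
      show "norm (U *v (W *v x - P *v x)) \<le> c * norm x"
        using F[of x] by (simp only: unitary_normv[OF uU])
      show "norm (W *v (U *v x) - P *v (U *v x)) \<le> c * norm (U *v x)" by (rule F)
    qed
    finally show ?thesis by (simp add: unitary_normv[OF uU])
  qed
  have "op_norm G \<le> 2 * c" unfolding op_norm_def by (rule onorm_le) (rule Gx)
  also have "2 * c \<le> 10 * real N * e0" using kN e0pos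
    by (simp add: c_def algebra_simps) (simp add: mult_left_mono)
  also have "\<dots> < 10 * real N * \<epsilon>" using N1 e0e by simp
  also have "\<dots> \<le> 4 * real d ^ 3 * real N * \<epsilon>"
  proof -
    have "(27::real) \<le> real d ^ 3"
    proof -
      have "(3::real)^3 \<le> real d ^ 3" using d3 by (intro power_mono) auto
      then show ?thesis by simp
    qed
    then have "10 \<le> 4 * real d ^ 3" by simp
    then show ?thesis using N1 assms(6) by (intro mult_right_mono) auto
  qed
  finally show ?thesis by (simp add: G_def N_def)
qed


end
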